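(* Let $\mathcal{H}_k$ be a truncated space with orthonormal basis $f_m(z)=(1+b_mz)z^m$, $m\ge0$, where $b_t=0$ for all $t\ge n$; let $U:\mathcal{H}_k\to H^2(\mathbb{D})$ be the unitary with $Uf_m=z^m$, and let $S_n=UM_zU^*$ be the corresponding $n$-shift on $H^2(\mathbb{D})$. Then every closed subspace $\mathcal{M}\subseteq H^2(\mathbb{D})$ invariant under $S_n$ is hyperinvariant for $S_n$, i.e. $X\mathcal{M}\subseteq\mathcal{M}$ for every bounded operator $X$ on $H^2(\mathbb{D})$ with $XS_n=S_nX$.
   Context: Fix $n \ge 1$. $H^2(\mathbb{D})$ is the Hardy space on the open unit disc. A truncated space is a reproducing kernel Hilbert space $\mathcal{H}_k$ of analytic functions on $\mathbb{D}$ (with scalar analytic kernel $k$) such that: $\mathbb{C}[z]\subseteq\mathcal{H}_k$; the multiplication operator $M_z$ is bounded on $\mathcal{H}_k$; and the functions $f_m(z) = (1 + b_m z)z^m$, $m \ge 0$, form an orthonormal basis of $\mathcal{H}_k$, for scalars $\{b_m\}$ with $b_t = 0$ for $t \ge n$. *)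

theory Defs
  imports "HOL-Analysis.Analysis"
begin

definition l2 :: "(nat \<Rightarrow> complex) set" where
  "l2 = {c. summable (\<lambda>m. (cmod (c m))^2)}"

definition H2 :: "(complex \<Rightarrow> complex) set" where
  "H2 = {f. \<exists>c\<in>l2. (\<forall>z\<in>ball 0 1. (\<lambda>m. c m * z ^ m) sums f z)
              \<and> (\<forall>z. z \<notin> ball 0 1 \<longrightarrow> f z = 0)}"

definition h2coeff :: "(complex \<Rightarrow> complex) \<Rightarrow> nat \<Rightarrow> complex" where
  "h2coeff f = (THE c. c \<in> l2 \<and> (\<forall>z\<in>ball 0 1. (\<lambda>m. c m * z ^ m) sums f z))"

definition h2norm :: "(complex \<Rightarrow> complex) \<Rightarrow> real" where
  "h2norm f = sqrt (\<Sum>m. (cmod (h2coeff f m))^2)"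

definition fb :: "(nat \<Rightarrow> complex) \<Rightarrow> nat \<Rightarrow> complex \<Rightarrow> complex" where
  "fb b m z = (1 + b m * z) * z ^ m"

text \<open>The truncated space H_k: all sums of l2-combinations of the f_m (its norm makes
  the f_m an orthonormal basis).\<close>
definition Hk :: "(nat \<Rightarrow> complex) \<Rightarrow> (complex \<Rightarrow> complex) set" where
  "Hk b = {g. \<exists>c\<in>l2. (\<forall>z\<in>ball 0 1. (\<lambda>m. c m * fb b m z) sums g z)
              \<and> (\<forall>z. z \<notin> ball 0 1 \<longrightarrow> g z = 0)}"

definition hk_coeff :: "(nat \<Rightarrow> complex) \<Rightarrow> (complex \<Rightarrow> complex) \<Rightarrow> nat \<Rightarrow> complex" where
  "hk_coeff b g = (THE c. c \<in> l2 \<and> (\<forall>z\<in>ball 0 1. (\<lambda>m. c m * fb b m z) sums g z))"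

text \<open>The unitary U : H_k \<rightarrow> H^2 with U f_m = z^m, and its adjoint (= inverse)
  U^* : H^2 \<rightarrow> H_k with U^* z^m = f_m.\<close>
definition Uk :: "(nat \<Rightarrow> complex) \<Rightarrow> (complex \<Rightarrow> complex) \<Rightarrow> (complex \<Rightarrow> complex)" where
  "Uk b g = (\<lambda>z. if z \<in> ball 0 1 then (\<Sum>m. hk_coeff b g m * z ^ m) else 0)"

definition Uk_adj :: "(nat \<Rightarrow> complex) \<Rightarrow> (complex \<Rightarrow> complex) \<Rightarrow> (complex \<Rightarrow> complex)" where
  "Uk_adj b h = (\<lambda>z. if z \<in> ball 0 1 then (\<Sum>m. h2coeff h m * fb b m z) else 0)"

definition Mz :: "(complex \<Rightarrow> complex) \<Rightarrow> (complex \<Rightarrow> complex)" where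
  "Mz g = (\<lambda>z. z * g z)"

definition Sn :: "(nat \<Rightarrow> complex) \<Rightarrow> (complex \<Rightarrow> complex) \<Rightarrow> (complex \<Rightarrow> complex)" where
  "Sn b h = Uk b (Mz (Uk_adj b h))"

definition h2_closed_subspace :: "(complex \<Rightarrow> complex) set \<Rightarrow> bool" where
  "h2_closed_subspace M \<longleftrightarrow> M \<subseteq> H2 \<and> (\<lambda>z. 0) \<in> M
     \<and> (\<forall>f\<in>M. \<forall>g\<in>M. (\<lambda>z. f z + g z) \<in> M)
     \<and> (\<forall>a::complex. \<forall>f\<in>M. (\<lambda>z. a * f z) \<in> M)
     \<and> (\<forall>u f. (\<forall>k. u k \<in> M) \<longrightarrow> f \<in> H2 \<longrightarrow>
              (\<lambda>k. h2norm (\<lambda>z. u k z - f z)) \<longlonglongrightarrow> 0 \<longrightarrow> f \<in> M)"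

definition h2_bounded_op :: "((complex \<Rightarrow> complex) \<Rightarrow> (complex \<Rightarrow> complex)) \<Rightarrow> bool" where
  "h2_bounded_op X \<longleftrightarrow> (\<forall>f\<in>H2. X f \<in> H2)
     \<and> (\<forall>f\<in>H2. \<forall>g\<in>H2. X (\<lambda>z. f z + g z) = (\<lambda>z. X f z + X g z))
     \<and> (\<forall>a::complex. \<forall>f\<in>H2. X (\<lambda>z. a * f z) = (\<lambda>z. a * X f z))
     \<and> (\<exists>C. \<forall>f\<in>H2. h2norm (X f) \<le> C * h2norm f)"

end

theory Submission
  imports Defs "HOL-Complex_Analysis.Conformal_Mappings"
begin


definition nrm :: "(nat \<Rightarrow> complex) \<Rightarrow> real" where
  "nrm c = sqrt (\<Sum>m. (cmod (c m))^2)"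

definition L2 :: "nat \<Rightarrow> (nat \<Rightarrow> complex) \<Rightarrow> real" where
  "L2 K c = L2_set (\<lambda>m. cmod (c m)) {..<K}"

lemma L2_sq: "(L2 K c)^2 = (\<Sum>m<K. (cmod (c m))^2)"
  unfolding L2_def L2_set_def by (simp add: sum_nonneg)

lemma l2_summable: "c \<in> l2 \<Longrightarrow> summable (\<lambda>m. (cmod (c m))^2)"
  by (simp add: l2_def)

lemma L2_le_nrm: assumes "c \<in> l2" shows "L2 K c \<le> nrm c"
proof -
  have "(\<Sum>m<K. (cmod (c m))^2) \<le> (\<Sum>m. (cmod (c m))^2)"
    by (rule sum_le_suminf) (use assms in \<open>auto simp: l2_def\<close>)
  then show ?thesis unfolding nrm_def L2_def L2_set_def by (simp add: real_sqrt_le_mono)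
qed

lemma nrm_nonneg: "c \<in> l2 \<Longrightarrow> nrm c \<ge> 0" by (simp add: nrm_def l2_def suminf_nonneg)

lemma l2_boundI: assumes "\<And>K. L2 K c \<le> B" shows "c \<in> l2" "nrm c \<le> B"
proof -
  have B0: "0 \<le> B" using assms[of 0] by (simp add: L2_def)
  have le: "(\<Sum>m<K. (cmod (c m))^2) \<le> B^2" for K
  proof -
    have "(L2 K c)^2 \<le> B^2" using assms[of K] by (intro power_mono) (auto simp: L2_def)
    then show ?thesis by (simp add: L2_sq)
  qed
  have sm: "summable (\<lambda>m. (cmod (c m))^2)"
    by (rule summableI_nonneg_bounded[where x="B^2"]) (use le in auto)
  then show "c \<in> l2" by (simp add: l2_def)
  have "(\<Sum>m. (cmod (c m))^2) \<le> B^2" by (rule suminf_le_const[OF sm]) (use le in auto)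
  then have "nrm c \<le> sqrt (B^2)" unfolding nrm_def using real_sqrt_le_mono by blast
  then show "nrm c \<le> B" using B0 by simp
qed

lemma coeff_le_nrm: assumes "c \<in> l2" shows "cmod (c m) \<le> nrm c"
proof -
  have "cmod (c m) \<le> L2 (Suc m) c" unfolding L2_def by (rule member_le_L2_set) auto
  then show ?thesis using L2_le_nrm[OF assms, of "Suc m"] by linarith
qed

lemma l2_dom: assumes "v \<in> l2" "0 \<le> \<beta>" "\<And>m. cmod (u m) \<le> \<beta> * cmod (v m)"
  shows "u \<in> l2" "nrm u \<le> \<beta> * nrm v"
proof -
  have "L2 K u \<le> \<beta> * nrm v" for K
  proof -
    have "L2 K u \<le> L2_set (\<lambda>m. \<beta> * cmod (v m)) {..<K}" unfolding L2_def
      by (rule L2_set_mono) (use assms in auto)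
    also have "\<dots> = \<beta> * L2 K v" unfolding L2_def by (simp add: L2_set_right_distrib assms)
    also have "\<dots> \<le> \<beta> * nrm v" using L2_le_nrm[OF assms(1)] assms(2) by (simp add: mult_left_mono)
    finally show ?thesis .
  qed
  then show "u \<in> l2" "nrm u \<le> \<beta> * nrm v" using l2_boundI by auto
qed

lemma l2_add: assumes "c \<in> l2" "d \<in> l2"
  shows "(\<lambda>m. c m + d m) \<in> l2" "nrm (\<lambda>m. c m + d m) \<le> nrm c + nrm d"
proof -
  have "L2 K (\<lambda>m. c m + d m) \<le> nrm c + nrm d" for K
  proof -
    have "L2 K (\<lambda>m. c m + d m) \<le> L2_set (\<lambda>m. cmod (c m) + cmod (d m)) {..<K}" unfolding L2_def
      by (rule L2_set_mono) (auto simp: norm_triangle_ineq)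
    also have "\<dots> \<le> L2 K c + L2 K d" unfolding L2_def by (rule L2_set_triangle_ineq)
    also have "\<dots> \<le> nrm c + nrm d" using L2_le_nrm assms by (meson add_mono)
    finally show ?thesis .
  qed
  then show "(\<lambda>m. c m + d m) \<in> l2" "nrm (\<lambda>m. c m + d m) \<le> nrm c + nrm d" using l2_boundI by auto
qed

lemma l2_scale: assumes "c \<in> l2"
  shows "(\<lambda>m. a * c m) \<in> l2" "nrm (\<lambda>m. a * c m) \<le> cmod a * nrm c"
  using l2_dom[OF assms, of "cmod a" "\<lambda>m. a * c m"] by (auto simp: norm_mult)

lemma l2_neg: assumes "c \<in> l2" shows "(\<lambda>m. - c m) \<in> l2" "nrm (\<lambda>m. - c m) = nrm c"
  using assms by (auto simp: l2_def nrm_def)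

lemma l2_diff: assumes "c \<in> l2" "d \<in> l2"
  shows "(\<lambda>m. c m - d m) \<in> l2" "nrm (\<lambda>m. c m - d m) \<le> nrm c + nrm d"
  using l2_add[OF assms(1) l2_neg(1)[OF assms(2)]] l2_neg(2)[OF assms(2)] by auto

lemma l2_finite: assumes "\<And>m. m \<ge> K \<Longrightarrow> u m = 0"
  shows "u \<in> l2" "nrm u \<le> (\<Sum>m<K. cmod (u m))" "nrm u \<le> L2 K u"
proof -
  have L: "L2 J u \<le> L2 K u" for J
  proof -
    have "(\<Sum>m<J. (cmod (u m))^2) \<le> (\<Sum>m<max J K. (cmod (u m))^2)"
      by (rule sum_mono2) auto
    also have "\<dots> = (\<Sum>m<K. (cmod (u m))^2)"
      by (rule sum.mono_neutral_right) (use assms in auto)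
    finally have "(L2 J u)^2 \<le> (L2 K u)^2" by (simp add: L2_sq)
    then show "L2 J u \<le> L2 K u" by (rule power2_le_imp_le) (simp add: L2_def)
  qed
  then show "nrm u \<le> L2 K u" using l2_boundI by auto
  have "L2 J u \<le> (\<Sum>m<K. cmod (u m))" for J
  proof -
    have "(\<Sum>m<J. (cmod (u m))^2) \<le> (\<Sum>m<max J K. (cmod (u m))^2)"
      by (rule sum_mono2) auto
    also have "\<dots> = (\<Sum>m<K. (cmod (u m))^2)"
      by (rule sum.mono_neutral_right) (use assms in auto)
    finally have "(L2 J u)^2 \<le> (L2 K u)^2" by (simp add: L2_sq)
    then have "L2 J u \<le> L2 K u" by (rule power2_le_imp_le) (simp add: L2_def)
    also have "\<dots> \<le> (\<Sum>m<K. cmod (u m))" unfolding L2_def by (rule L2_set_le_sum) auto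
    finally show ?thesis .
  qed
  then show "u \<in> l2" "nrm u \<le> (\<Sum>m<K. cmod (u m))" using l2_boundI by auto
qed

lemma nrm_tail: assumes "c \<in> l2"
  shows "(\<lambda>K. nrm (\<lambda>m. if m < K then 0 else c m)) \<longlonglongrightarrow> 0"
proof -
  let ?f = "\<lambda>m. (cmod (c m))^2"
  have s: "?f sums (\<Sum>m. ?f m)" using assms by (simp add: l2_def summable_sums)
  have eq: "nrm (\<lambda>m. if m < K then 0 else c m) = sqrt ((\<Sum>m. ?f m) - (\<Sum>m<K. ?f m))" for K
  proof -
    have "(\<lambda>m. if m < K then ?f m else 0) sums (\<Sum>m\<in>{..<K}. ?f m)"
      using sums_If_finite_set[of "{..<K}" ?f] by simp
    from sums_diff[OF s this]
    have "(\<lambda>m. if m < K then 0 else ?f m) sums ((\<Sum>m. ?f m) - (\<Sum>m<K. ?f m))"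
      by (simp add: if_distrib cong: if_cong)
    moreover have "(\<lambda>m. (cmod (if m < K then 0 else c m))^2) = (\<lambda>m. if m < K then 0 else ?f m)"
      by auto
    ultimately have "(\<lambda>m. (cmod (if m < K then 0 else c m))^2) sums ((\<Sum>m. ?f m) - (\<Sum>m<K. ?f m))"
      by simp
    then show ?thesis unfolding nrm_def by (simp add: sums_iff)
  qed
  have "(\<lambda>K. (\<Sum>m<K. ?f m)) \<longlonglongrightarrow> (\<Sum>m. ?f m)" using s by (simp add: sums_def)
  then have "(\<lambda>K. (\<Sum>m. ?f m) - (\<Sum>m<K. ?f m)) \<longlonglongrightarrow> 0"
    using tendsto_diff[OF tendsto_const, of _ _ _ "\<Sum>m. ?f m"] by fastforce
  then have "(\<lambda>K. sqrt ((\<Sum>m. ?f m) - (\<Sum>m<K. ?f m))) \<longlonglongrightarrow> sqrt 0"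
    by (intro tendsto_real_sqrt)
  then show ?thesis by (simp add: eq)
qed


definition Vs :: "(nat \<Rightarrow> complex) \<Rightarrow> nat \<Rightarrow> complex" where
  "Vs u = (\<lambda>m. case m of 0 \<Rightarrow> 0 | Suc k \<Rightarrow> u k)"

definition Vp :: "nat \<Rightarrow> (nat \<Rightarrow> complex) \<Rightarrow> nat \<Rightarrow> complex" where
  "Vp i u = (\<lambda>j. if i \<le> j then u (j - i) else 0)"

definition conv :: "(nat \<Rightarrow> complex) \<Rightarrow> (nat \<Rightarrow> complex) \<Rightarrow> nat \<Rightarrow> complex" where
  "conv a g = (\<lambda>j. \<Sum>i\<le>j. a i * g (j - i))"

definition trn :: "nat \<Rightarrow> (nat \<Rightarrow> complex) \<Rightarrow> nat \<Rightarrow> complex" where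
  "trn K u = (\<lambda>m. if m < K then u m else 0)"

definition tail :: "nat \<Rightarrow> (nat \<Rightarrow> complex) \<Rightarrow> nat \<Rightarrow> complex" where
  "tail K u = (\<lambda>m. if m < K then 0 else u m)"

definition csub :: "(nat \<Rightarrow> complex) set \<Rightarrow> bool" where
  "csub N \<longleftrightarrow> N \<subseteq> l2 \<and> (\<lambda>m. 0) \<in> N \<and> (\<forall>u\<in>N. \<forall>v\<in>N. (\<lambda>m. u m + v m) \<in> N)
     \<and> (\<forall>a. \<forall>u\<in>N. (\<lambda>m. a * u m) \<in> N)
     \<and> (\<forall>u f. (\<forall>k. u k \<in> N) \<longrightarrow> f \<in> l2 \<longrightarrow> (\<lambda>k. nrm (\<lambda>m. u k m - f m)) \<longlonglongrightarrow> 0 \<longrightarrow> f \<in> N)"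

definition lop :: "((nat \<Rightarrow> complex) \<Rightarrow> nat \<Rightarrow> complex) \<Rightarrow> real \<Rightarrow> bool" where
  "lop Y C \<longleftrightarrow> (\<forall>u\<in>l2. Y u \<in> l2) \<and> (\<forall>u\<in>l2. \<forall>v\<in>l2. Y (\<lambda>m. u m + v m) = (\<lambda>m. Y u m + Y v m))
     \<and> (\<forall>a. \<forall>u\<in>l2. Y (\<lambda>m. a * u m) = (\<lambda>m. a * Y u m)) \<and> (\<forall>u\<in>l2. nrm (Y u) \<le> C * nrm u)"

lemma lop_l2: "lop Y C \<Longrightarrow> u \<in> l2 \<Longrightarrow> Y u \<in> l2" by (simp add: lop_def)
lemma lop_add: "lop Y C \<Longrightarrow> u \<in> l2 \<Longrightarrow> v \<in> l2 \<Longrightarrow> Y (\<lambda>m. u m + v m) = (\<lambda>m. Y u m + Y v m)"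
  by (simp add: lop_def)
lemma lop_scale: "lop Y C \<Longrightarrow> u \<in> l2 \<Longrightarrow> Y (\<lambda>m. a * u m) = (\<lambda>m. a * Y u m)"
  by (simp add: lop_def)
lemma lop_bound: "lop Y C \<Longrightarrow> u \<in> l2 \<Longrightarrow> nrm (Y u) \<le> C * nrm u" by (simp add: lop_def)

lemma Vs_l2: assumes "u \<in> l2" shows "Vs u \<in> l2" "nrm (Vs u) = nrm u"
proof -
  have s: "(\<lambda>m. (cmod (u m))^2) sums (\<Sum>m. (cmod (u m))^2)" using assms by (simp add: l2_def summable_sums)
  have "(\<lambda>n. (cmod (Vs u (Suc n)))^2) sums (\<Sum>m. (cmod (u m))^2)" using s by (simp add: Vs_def)
  then have "(\<lambda>n. (cmod (Vs u n))^2) sums (\<Sum>m. (cmod (u m))^2)"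
    by (subst (asm) sums_Suc_iff) (simp add: Vs_def)
  then show "Vs u \<in> l2" "nrm (Vs u) = nrm u" by (auto simp: l2_def nrm_def sums_iff)
qed

lemma Vp_0: "Vp 0 u = u" by (simp add: Vp_def)
lemma Vp_Suc: "Vp (Suc i) u = Vs (Vp i u)"
  by (auto simp: Vp_def Vs_def fun_eq_iff split: nat.split)

lemma Vp_l2: assumes "u \<in> l2" shows "Vp i u \<in> l2" "nrm (Vp i u) = nrm u"
  by (induction i) (auto simp: Vp_0 Vp_Suc Vs_l2 assms)

lemma conv_decomp: "conv a g j = g 0 * a j + Vs (conv a (\<lambda>m. g (Suc m))) j"
proof (cases j)
  case 0 then show ?thesis by (simp add: conv_def Vs_def)
next
  case (Suc k)
  have "conv a g j = (\<Sum>i\<le>k. a i * g (Suc k - i)) + a (Suc k) * g 0"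
    by (simp add: conv_def Suc)
  also have "(\<Sum>i\<le>k. a i * g (Suc k - i)) = (\<Sum>i\<le>k. a i * g (Suc (k - i)))"
    by (rule sum.cong) (auto simp: Suc_diff_le)
  finally show ?thesis by (simp add: Suc Vs_def conv_def)
qed

lemma tail_eq: "tail K u = (\<lambda>m. if m < K then 0 else u m)" by (simp add: tail_def)

lemma lop_diff: assumes "lop Y C" "u \<in> l2" "v \<in> l2"
  shows "Y (\<lambda>m. u m - v m) = (\<lambda>m. Y u m - Y v m)"
proof -
  have 1: "Y (\<lambda>m. u m + (-1) * v m) = (\<lambda>m. Y u m + (-1) * Y v m)"
    using lop_add[OF assms(1,2) l2_scale(1)[OF assms(3), of "-1"]] lop_scale[OF assms(1,3), of "-1"]
    by simp
  have 2: "(\<lambda>m. u m + (-1) * v m) = (\<lambda>m. u m - v m)" by simp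
  have 3: "(\<lambda>m. Y u m + (-1) * Y v m) = (\<lambda>m. Y u m - Y v m)" by simp
  from 1 show ?thesis unfolding 2 3 .
qed

lemma lop_zero: assumes "lop Y C" shows "Y (\<lambda>m. 0) = (\<lambda>m. 0)"
proof -
  have e: "(\<lambda>m. 0::complex) \<in> l2" by (simp add: l2_def)
  show ?thesis using lop_scale[OF assms e, of 0] by simp
qed

lemma finite_supp_l2: "(\<And>m. m \<ge> K \<Longrightarrow> u m = 0) \<Longrightarrow> u \<in> l2" using l2_finite by blast

lemma lop_conv_finite:
  assumes Y: "lop Y C" and comm: "\<forall>u\<in>l2. Y (Vs u) = Vs (Y u)"
  shows "\<forall>g. (\<forall>m\<ge>K. g m = 0) \<longrightarrow> Y g = conv (Y (\<lambda>m. if m = 0 then 1 else 0)) g"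
proof (induction K)
  case 0
  then show ?case using lop_zero[OF Y] by (auto simp: conv_def fun_eq_iff)
next
  case (Suc K)
  show ?case
  proof (intro allI impI)
    fix g :: "nat \<Rightarrow> complex" assume g: "\<forall>m\<ge>Suc K. g m = 0"
    define e0 :: "nat \<Rightarrow> complex" where "e0 = (\<lambda>m. if m = 0 then 1 else 0)"
    define g' where "g' = (\<lambda>m. g (Suc m))"
    have g'0: "\<forall>m\<ge>K. g' m = 0" using g by (simp add: g'_def)
    have e0l: "e0 \<in> l2" by (rule finite_supp_l2[of 1]) (auto simp: e0_def)
    have g'l: "g' \<in> l2" by (rule finite_supp_l2[of K]) (use g'0 in auto)
    have dec: "g = (\<lambda>m. (\<lambda>m. g 0 * e0 m) m + Vs g' m)"
      by (auto simp: fun_eq_iff e0_def Vs_def g'_def split: nat.split)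
    have "Y g = (\<lambda>m. Y (\<lambda>m. g 0 * e0 m) m + Y (Vs g') m)"
      by (subst dec) (use Y e0l g'l l2_scale(1)[OF e0l] Vs_l2(1)[OF g'l] in \<open>simp add: lop_def\<close>)
    also have "\<dots> = (\<lambda>m. g 0 * Y e0 m + Vs (Y g') m)"
      using Y e0l comm g'l unfolding lop_def by auto
    also have "\<dots> = (\<lambda>m. g 0 * Y e0 m + Vs (conv (Y e0) g') m)"
      using Suc.IH g'0 by (simp add: e0_def)
    also have "\<dots> = conv (Y e0) g" by (auto simp: fun_eq_iff conv_decomp[of _ g] g'_def)
    finally show "Y g = conv (Y (\<lambda>m. if m = 0 then 1 else 0)) g" by (simp add: e0_def)
  qed
qed

lemma tendsto_le0:
  fixes x :: real
  assumes "f \<longlonglongrightarrow> 0" "\<And>K. K \<ge> K0 \<Longrightarrow> x \<le> f K" shows "x \<le> 0"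
proof -
  have "eventually (\<lambda>K. x \<le> f K) sequentially" using assms(2) eventually_sequentially by blast
  then show ?thesis using tendsto_lowerbound[OF assms(1)] by auto
qed

lemma lop_conv:
  assumes Y: "lop Y C" and comm: "\<forall>u\<in>l2. Y (Vs u) = Vs (Y u)" and g: "g \<in> l2"
  shows "Y g = conv (Y (\<lambda>m. if m = 0 then 1 else 0)) g"
proof
  fix j
  define \<phi> where "\<phi> = Y (\<lambda>m. if m = 0 then 1 else 0)"
  have fin: "Y (trn K g) = conv \<phi> (trn K g)" for K
    using lop_conv_finite[OF Y comm, of K] by (auto simp: trn_def \<phi>_def)
  have trl: "trn K g \<in> l2" for K by (rule finite_supp_l2[of K]) (auto simp: trn_def)
  have tll: "tail K g \<in> l2" for K by (rule l2_dom[OF g, of 1]) (auto simp: tail_def)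
  have tdiff: "(\<lambda>m. g m - trn K g m) = tail K g" for K by (auto simp: tail_def trn_def)
  have "cmod (Y g j - conv \<phi> g j) \<le> C * nrm (tail K g)" if "K \<ge> Suc j" for K
  proof -
    have "conv \<phi> (trn K g) j = conv \<phi> g j" unfolding conv_def trn_def
      by (rule sum.cong) (use that in auto)
    then have "Y g j - conv \<phi> g j = Y (\<lambda>m. g m - trn K g m) j"
      using lop_diff[OF Y g trl[of K]] fin[of K] by simp
    also have "\<dots> = Y (tail K g) j" by (simp add: tdiff)
    finally have "cmod (Y g j - conv \<phi> g j) = cmod (Y (tail K g) j)" by simp
    also have "\<dots> \<le> nrm (Y (tail K g))" using Y tll coeff_le_nrm unfolding lop_def by blast
    also have "\<dots> \<le> C * nrm (tail K g)" using Y tll unfolding lop_def by blast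
    finally show ?thesis .
  qed
  moreover have "(\<lambda>K. C * nrm (tail K g)) \<longlonglongrightarrow> 0"
    using tendsto_mult_right_zero[OF nrm_tail[OF g]] by (simp add: tail_def)
  ultimately have "cmod (Y g j - conv \<phi> g j) \<le> 0" using tendsto_le0 by blast
  then show "Y g j = conv \<phi> g j" by (simp add: \<phi>_def)
qed


lemma ip_bound: assumes "u \<in> l2" "v \<in> l2"
  shows "cmod (\<Sum>j<K. u j * cnj (v j)) \<le> nrm u * nrm v"
proof -
  have "cmod (\<Sum>j<K. u j * cnj (v j)) \<le> (\<Sum>j<K. cmod (u j * cnj (v j)))" by (rule norm_sum)
  also have "\<dots> = (\<Sum>j<K. \<bar>cmod (u j)\<bar> * \<bar>cmod (v j)\<bar>)" by (simp add: norm_mult)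
  also have "\<dots> \<le> L2 K u * L2 K v" unfolding L2_def by (rule L2_set_mult_ineq)
  also have "\<dots> \<le> nrm u * nrm v"
    using L2_le_nrm[OF assms(1)] L2_le_nrm[OF assms(2)] nrm_nonneg[OF assms(1)]
    by (intro mult_mono) (auto simp: L2_def)
  finally show ?thesis .
qed

lemma unimod_pow: assumes "cmod z = 1" "i \<le> j" shows "z ^ j * cnj z ^ (j - i) = z ^ i"
proof -
  have zc: "z * cnj z = 1" using assms(1) complex_norm_square[of z] by simp
  have "z ^ j = z ^ i * z ^ (j - i)" using assms(2) by (simp add: power_add[symmetric])
  then have "z ^ j * cnj z ^ (j - i) = z ^ i * (z * cnj z) ^ (j - i)" by (simp add: power_mult_distrib)
  then show ?thesis using zc by simp
qed

lemma maxmod_bound: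
  assumes Y: "lop Y C" and comm: "\<forall>u\<in>l2. Y (Vs u) = Vs (Y u)" and C0: "C \<ge> 0"
    and gK: "\<forall>m\<ge>K. g m = 0" and pK: "\<forall>m\<ge>K. \<psi> m = 0" and w: "cmod w \<le> 1"
  shows "cmod (\<Sum>j<K. conv (\<lambda>i. w ^ i * Y (\<lambda>m. if m = 0 then 1 else 0) i) g j * cnj (\<psi> j))
         \<le> C * nrm g * nrm \<psi>"
proof -
  define \<phi> where "\<phi> = Y (\<lambda>m. if m = 0 then 1 else 0)"
  define P where "P = (\<lambda>z. \<Sum>j<K. (\<Sum>i\<le>j. \<phi> i * z ^ i * g (j - i)) * cnj (\<psi> j))"
  have gl: "g \<in> l2" using finite_supp_l2[of K g] gK by auto
  have pl: "\<psi> \<in> l2" using finite_supp_l2[of K \<psi>] pK by auto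
  have holP: "P holomorphic_on UNIV" unfolding P_def by (intro holomorphic_intros)
  have sph: "cmod (P z) \<le> C * nrm g * nrm \<psi>" if z: "cmod z = 1" for z
  proof -
    define g' where "g' = (\<lambda>m. cnj z ^ m * g m)"
    have g'l: "g' \<in> l2" "nrm g' \<le> 1 * nrm g"
      using l2_dom[OF gl, of 1 g'] z by (auto simp: g'_def norm_mult norm_power)
    have g'K: "\<forall>m\<ge>K. g' m = 0" using gK by (simp add: g'_def)
    have Yg': "Y g' = conv \<phi> g'" using lop_conv_finite[OF Y comm, of K] g'K by (simp add: \<phi>_def)
    define w' where "w' = (\<lambda>j. z ^ j * Y g' j)"
    have w'l: "w' \<in> l2" "nrm w' \<le> 1 * nrm (Y g')"
      using l2_dom[OF lop_l2[OF Y g'l(1)], of 1 w'] z by (auto simp: w'_def norm_mult norm_power)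
    have "P z = (\<Sum>j<K. w' j * cnj (\<psi> j))"
    proof (unfold P_def, rule sum.cong[OF refl])
      fix j
      have "z ^ j * Y g' j = (\<Sum>i\<le>j. z ^ j * (\<phi> i * (cnj z ^ (j - i) * g (j - i))))"
        unfolding Yg' by (simp add: conv_def g'_def sum_distrib_left)
      also have "\<dots> = (\<Sum>i\<le>j. \<phi> i * z ^ i * g (j - i))"
      proof (rule sum.cong[OF refl])
        fix i assume "i \<in> {..j}"
        then have "z ^ j * cnj z ^ (j - i) = z ^ i" using unimod_pow[OF z] by simp
        then show "z ^ j * (\<phi> i * (cnj z ^ (j - i) * g (j - i))) = \<phi> i * z ^ i * g (j - i)"
          by (metis (no_types, lifting) mult.assoc mult.left_commute)
      qed
      finally have "z ^ j * Y g' j = (\<Sum>i\<le>j. \<phi> i * z ^ i * g (j - i))" .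
      then show "(\<Sum>i\<le>j. \<phi> i * z ^ i * g (j - i)) * cnj (\<psi> j) = w' j * cnj (\<psi> j)"
        by (simp add: w'_def)
    qed
    then have "cmod (P z) \<le> nrm w' * nrm \<psi>" using ip_bound[OF w'l(1) pl] by simp
    also have "\<dots> \<le> (C * nrm g) * nrm \<psi>"
    proof (rule mult_right_mono)
      show "nrm w' \<le> C * nrm g"
      proof -
        have "C * nrm g' \<le> C * nrm g" using g'l(2) C0 by (simp add: mult_left_mono)
        then show ?thesis using w'l(2) lop_bound[OF Y g'l(1)] by linarith
      qed
    qed (rule nrm_nonneg[OF pl])
    finally show ?thesis .
  qed
  have "cmod (P w) \<le> C * nrm g * nrm \<psi>"
  proof (rule maximum_modulus_frontier[of P "cball 0 1"])
    show "P holomorphic_on interior (cball 0 1)" using holP by (rule holomorphic_on_subset) auto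
    show "continuous_on (closure (cball 0 1)) P"
      using holomorphic_on_imp_continuous_on[OF holP] by (rule continuous_on_subset) auto
    show "bounded (cball (0::complex) 1)" by simp
    show "w \<in> cball 0 1" using w by simp
    fix z :: complex assume "z \<in> frontier (cball 0 1)"
    then have "cmod z = 1" by simp
    then show "cmod (P z) \<le> C * nrm g * nrm \<psi>" by (rule sph)
  qed
  moreover have "P w = (\<Sum>j<K. conv (\<lambda>i. w ^ i * \<phi> i) g j * cnj (\<psi> j))"
    unfolding P_def conv_def by (rule sum.cong[OF refl]) (simp add: algebra_simps)
  ultimately show ?thesis by (simp add: \<phi>_def)
qed


lemma sum_sq_cnj: "cmod (\<Sum>j<K. v j * cnj (v j)) = (L2 K v)^2"
proof -
  have "(\<Sum>j<K. v j * cnj (v j)) = (\<Sum>j<K. of_real ((cmod (v j))^2))"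
    by (rule sum.cong[OF refl]) (rule complex_norm_square[symmetric])
  also have "\<dots> = of_real (\<Sum>j<K. (cmod (v j))^2)" by (rule of_real_sum[symmetric])
  finally have "(\<Sum>j<K. v j * cnj (v j)) = of_real (\<Sum>j<K. (cmod (v j))^2)" .
  then have "cmod (\<Sum>j<K. v j * cnj (v j)) = \<bar>\<Sum>j<K. (cmod (v j))^2\<bar>"
    by (simp only: norm_of_real)
  also have "\<dots> = (L2 K v)^2" by (simp add: L2_sq sum_nonneg)
  finally show ?thesis .
qed

lemma Yw_bound:
  assumes Y: "lop Y C" and comm: "\<forall>u\<in>l2. Y (Vs u) = Vs (Y u)" and C0: "C \<ge> 0"
    and g: "g \<in> l2" and w: "cmod w \<le> 1"
  shows "conv (\<lambda>i. w ^ i * Y (\<lambda>m. if m = 0 then 1 else 0) i) g \<in> l2"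
        "nrm (conv (\<lambda>i. w ^ i * Y (\<lambda>m. if m = 0 then 1 else 0) i) g) \<le> C * nrm g"
proof -
  define a where "a = (\<lambda>i. w ^ i * Y (\<lambda>m. if m = 0 then 1 else 0) i)"
  define v where "v = conv a g"
  have "L2 J v \<le> C * nrm g" for J
  proof -
    define gJ where "gJ = trn J g"
    define \<psi> where "\<psi> = trn J v"
    have gJK: "\<forall>m\<ge>J. gJ m = 0" by (simp add: gJ_def trn_def)
    have pK: "\<forall>m\<ge>J. \<psi> m = 0" by (simp add: \<psi>_def trn_def)
    have gJn: "nrm gJ \<le> 1 * nrm g" using l2_dom(2)[OF g, of 1 gJ] by (auto simp: gJ_def trn_def)
    have pn: "nrm \<psi> \<le> L2 J \<psi>" using l2_finite(3)[where K=J and u=\<psi>] pK by auto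
    have pL: "L2 J \<psi> = L2 J v" unfolding L2_def \<psi>_def trn_def by (rule L2_set_cong) auto
    have cv: "conv a gJ j = v j" if "j < J" for j
      unfolding v_def conv_def gJ_def trn_def by (rule sum.cong) (use that in auto)
    have "(L2 J v)^2 = cmod (\<Sum>j<J. conv a gJ j * cnj (\<psi> j))"
      using sum_sq_cnj[where K=J and v=v] cv by (simp add: \<psi>_def trn_def)
    also have "\<dots> \<le> C * nrm gJ * nrm \<psi>"
      using maxmod_bound[OF Y comm C0 gJK pK w] by (simp add: a_def)
    also have "\<dots> \<le> C * nrm g * L2 J v"
      using gJn pn pL C0 nrm_nonneg[of gJ] nrm_nonneg[of \<psi>] finite_supp_l2[where K=J and u=gJ] finite_supp_l2[where K=J and u=\<psi>]
        gJK pK by (intro mult_mono) (auto simp: mult_left_mono)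
    finally have "(L2 J v)^2 \<le> (C * nrm g) * L2 J v" by simp
    moreover have "L2 J v \<ge> 0" by (simp add: L2_def)
    moreover have "C * nrm g \<ge> 0" using C0 nrm_nonneg[OF g] by simp
    ultimately show ?thesis
      by (cases "L2 J v = 0") (auto simp: power2_eq_square intro: mult_right_le_imp_le)
  qed
  then show "conv a g \<in> l2" "nrm (conv a g) \<le> C * nrm g" using l2_boundI unfolding v_def by auto
qed


lemma conv_trn_Vp: "conv (trn K b) h j = (\<Sum>i<K. b i * Vp i h j)"
proof -
  have "conv (trn K b) h j = (\<Sum>i\<in>{..j}. if i \<in> {..<K} then b i * h (j - i) else 0)"
    unfolding conv_def trn_def by (rule sum.cong) auto
  also have "\<dots> = (\<Sum>i\<in>{..j} \<inter> {..<K}. b i * h (j - i))" by (rule sum.inter_restrict[symmetric]) simp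
  also have "\<dots> = (\<Sum>i\<in>{..<K} \<inter> {..j}. b i * h (j - i))" by (simp add: Int_commute)
  also have "\<dots> = (\<Sum>i\<in>{..<K}. if i \<in> {..j} then b i * h (j - i) else 0)"
    by (rule sum.inter_restrict) simp
  also have "\<dots> = (\<Sum>i<K. b i * Vp i h j)" unfolding Vp_def by (rule sum.cong) auto
  finally show ?thesis .
qed

lemma l2_fsum: assumes "finite I" "\<And>i. i \<in> I \<Longrightarrow> u i \<in> l2"
  shows "(\<lambda>j. \<Sum>i\<in>I. u i j) \<in> l2 \<and> nrm (\<lambda>j. \<Sum>i\<in>I. u i j) \<le> (\<Sum>i\<in>I. nrm (u i))"
  using assms
proof (induction I rule: finite_induct)
  case empty
  have "(\<lambda>j. 0::complex) \<in> l2" by (simp add: l2_def)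
  moreover have "nrm (\<lambda>j. 0::complex) = 0" by (simp add: nrm_def)
  ultimately show ?case by simp
next
  case (insert x F)
  then have IH: "(\<lambda>j. \<Sum>i\<in>F. u i j) \<in> l2" "nrm (\<lambda>j. \<Sum>i\<in>F. u i j) \<le> (\<Sum>i\<in>F. nrm (u i))" by auto
  have ux: "u x \<in> l2" using insert by auto
  have eq: "(\<lambda>j. \<Sum>i\<in>insert x F. u i j) = (\<lambda>j. u x j + (\<lambda>j. \<Sum>i\<in>F. u i j) j)"
    using insert by simp
  show ?case unfolding eq using l2_add[OF ux IH(1)] IH(2) insert by simp
qed

lemma young: assumes b: "summable (\<lambda>i. cmod (b i))" and h: "h \<in> l2"
  shows "conv b h \<in> l2" "nrm (conv b h) \<le> (\<Sum>i. cmod (b i)) * nrm h"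
proof -
  have "L2 J (conv b h) \<le> (\<Sum>i. cmod (b i)) * nrm h" for J
  proof -
    have eqc: "L2 J (conv b h) = L2 J (conv (trn J b) h)"
      unfolding L2_def by (rule L2_set_cong) (auto simp: conv_def trn_def intro!: sum.cong)
    have ct: "conv (trn J b) h = (\<lambda>j. \<Sum>i\<in>{..<J}. (\<lambda>i j. b i * Vp i h j) i j)"
      by (simp add: fun_eq_iff conv_trn_Vp)
    have ul: "(\<lambda>j. b i * Vp i h j) \<in> l2" "nrm (\<lambda>j. b i * Vp i h j) \<le> cmod (b i) * nrm h" for i
      using l2_scale[OF Vp_l2(1)[OF h, of i], of "b i"] Vp_l2(2)[OF h, of i] by auto
    have fs: "conv (trn J b) h \<in> l2 \<and> nrm (conv (trn J b) h) \<le> (\<Sum>i<J. nrm (\<lambda>j. b i * Vp i h j))"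
      unfolding ct by (rule l2_fsum) (use ul in auto)
    have "L2 J (conv b h) \<le> nrm (conv (trn J b) h)" using eqc L2_le_nrm fs by simp
    also have "\<dots> \<le> (\<Sum>i<J. nrm (\<lambda>j. b i * Vp i h j))" using fs by simp
    also have "\<dots> \<le> (\<Sum>i<J. cmod (b i) * nrm h)" by (rule sum_mono) (use ul in auto)
    also have "\<dots> = (\<Sum>i<J. cmod (b i)) * nrm h" by (simp add: sum_distrib_right)
    also have "\<dots> \<le> (\<Sum>i. cmod (b i)) * nrm h"
      by (rule mult_right_mono[OF sum_le_suminf[OF b]]) (auto simp: nrm_nonneg[OF h])
    finally show ?thesis .
  qed
  then show "conv b h \<in> l2" "nrm (conv b h) \<le> (\<Sum>i. cmod (b i)) * nrm h" using l2_boundI by auto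
qed

lemma real_tail: fixes f :: "nat \<Rightarrow> real" assumes "summable f"
  shows "summable (\<lambda>i. if i < K then 0 else f i)" "(\<lambda>K. \<Sum>i. if i < K then 0 else f i) \<longlonglongrightarrow> 0"
proof -
  have s: "f sums (\<Sum>m. f m)" using assms by (simp add: summable_sums)
  have eq: "(\<lambda>m. if m < K then 0 else f m) sums ((\<Sum>m. f m) - (\<Sum>m<K. f m))" for K
  proof -
    have "(\<lambda>m. if m < K then f m else 0) sums (\<Sum>m\<in>{..<K}. f m)"
      using sums_If_finite_set[of "{..<K}" f] by simp
    from sums_diff[OF s this] show ?thesis by (simp add: if_distrib cong: if_cong)
  qed
  then show "summable (\<lambda>i. if i < K then 0 else f i)" using sums_summable by blast
  have "(\<lambda>K. (\<Sum>m<K. f m)) \<longlonglongrightarrow> (\<Sum>m. f m)" using s by (simp add: sums_def)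
  then have "(\<lambda>K. (\<Sum>m. f m) - (\<Sum>m<K. f m)) \<longlonglongrightarrow> 0"
    using tendsto_diff[OF tendsto_const, of _ _ _ "\<Sum>m. f m"] by fastforce
  then show "(\<lambda>K. \<Sum>i. if i < K then 0 else f i) \<longlonglongrightarrow> 0" using eq by (simp add: sums_iff)
qed

lemma csub_l2: "csub N \<Longrightarrow> u \<in> N \<Longrightarrow> u \<in> l2" by (auto simp: csub_def)

lemma csub_sum: assumes "csub N" "\<And>i. u i \<in> N" shows "(\<lambda>j. \<Sum>i<(K::nat). u i j) \<in> N"
proof (induction K)
  case 0 then show ?case using assms(1) by (simp add: csub_def)
next
  case (Suc K)
  have "(\<lambda>j. \<Sum>i<Suc K. u i j) = (\<lambda>j. (\<lambda>j. \<Sum>i<K. u i j) j + u K j)" by simp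
  then show ?case using Suc assms unfolding csub_def by metis
qed

lemma csub_Vp: assumes "csub N" "\<forall>u\<in>N. Vs u \<in> N" "h \<in> N" shows "Vp i h \<in> N"
  using assms by (induction i) (auto simp: Vp_0 Vp_Suc)

lemma conv_in_N:
  assumes N: "csub N" and VN: "\<forall>u\<in>N. Vs u \<in> N" and h: "h \<in> N"
    and a: "summable (\<lambda>i. cmod (a i))"
  shows "conv a h \<in> N"
proof -
  have hl: "h \<in> l2" using csub_l2[OF N h] .
  define s where "s = (\<lambda>K. conv (trn K a) h)"
  have sN: "s K \<in> N" for K
  proof -
    have "s K = (\<lambda>j. \<Sum>i<K. (\<lambda>i j. a i * Vp i h j) i j)" by (simp add: s_def fun_eq_iff conv_trn_Vp)
    also have "\<dots> \<in> N"
      by (rule csub_sum[OF N]) (use N csub_Vp[OF N VN h] in \<open>auto simp: csub_def\<close>)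
    finally show ?thesis .
  qed
  have tl: "summable (\<lambda>i. cmod (tail K a i))" for K
    using real_tail(1)[OF a, of K] by (simp add: tail_def if_distrib cong: if_cong)
  have diff: "(\<lambda>m. s K m - conv a h m) = (\<lambda>m. - conv (tail K a) h m)" for K
    by (auto simp: s_def conv_def trn_def tail_def fun_eq_iff sum_subtractf[symmetric] sum_negf[symmetric] intro!: sum.cong)
  have bnd: "nrm (\<lambda>m. s K m - conv a h m) \<le> (\<Sum>i. if i < K then 0 else cmod (a i)) * nrm h" for K
  proof -
    have "nrm (\<lambda>m. s K m - conv a h m) = nrm (conv (tail K a) h)"
      unfolding diff using l2_neg(2)[OF young(1)[OF tl hl]] by simp
    also have "\<dots> \<le> (\<Sum>i. cmod (tail K a i)) * nrm h" by (rule young(2)[OF tl hl])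
    also have "(\<Sum>i. cmod (tail K a i)) = (\<Sum>i. if i < K then 0 else cmod (a i))"
      by (simp add: tail_def if_distrib cong: if_cong)
    finally show ?thesis .
  qed
  have lim: "(\<lambda>K. (\<Sum>i. if i < K then 0 else cmod (a i)) * nrm h) \<longlonglongrightarrow> 0"
    using tendsto_mult_left_zero[OF real_tail(2)[OF a]] by simp
  have "(\<lambda>K. nrm (\<lambda>m. s K m - conv a h m)) \<longlonglongrightarrow> 0"
  proof (rule tendsto_sandwich[OF _ _ tendsto_const lim])
    show "eventually (\<lambda>K. 0 \<le> nrm (\<lambda>m. s K m - conv a h m)) sequentially"
      using nrm_nonneg[OF l2_diff(1)[OF csub_l2[OF N sN] young(1)[OF a hl]]] by simp
    show "eventually (\<lambda>K. nrm (\<lambda>m. s K m - conv a h m) \<le> (\<Sum>i. if i < K then 0 else cmod (a i)) * nrm h) sequentially"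
      using bnd by simp
  qed
  then show ?thesis using N sN young(1)[OF a hl] unfolding csub_def by blast
qed


lemma Dr_conv: "conv (\<lambda>i. w ^ i * \<phi> i) (\<lambda>m. w ^ m * h m) j = w ^ j * conv \<phi> h j"
  unfolding conv_def sum_distrib_left
proof (rule sum.cong[OF refl])
  fix i assume "i \<in> {..j}"
  then have "w ^ i * w ^ (j - i) = w ^ j" by (simp add: power_add[symmetric])
  then show "w ^ i * \<phi> i * (w ^ (j - i) * h (j - i)) = w ^ j * (\<phi> i * h (j - i))"
    by (metis (no_types, lifting) mult.assoc mult.left_commute)
qed

lemma Dr_lim:
  assumes u: "u \<in> l2" and r: "\<And>k. 0 \<le> r k" "\<And>k. r k \<le> 1" and rl: "r \<longlonglongrightarrow> 1"
  shows "(\<lambda>k. nrm (\<lambda>j. complex_of_real (r k) ^ j * u j - u j)) \<longlonglongrightarrow> 0"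
proof (rule LIMSEQ_I)
  fix \<epsilon> :: real assume e: "0 < \<epsilon>"
  obtain K where K: "norm (nrm (\<lambda>m. if m < K then 0 else u m) - 0) < \<epsilon>/2"
    using LIMSEQ_D[OF nrm_tail[OF u], of "\<epsilon>/2"] e by auto
  have tl2: "(\<lambda>m. if m < K then 0 else u m) \<in> l2" by (rule l2_dom[OF u, of 1]) auto
  define f where "f = (\<lambda>k. \<Sum>j<K. cmod (complex_of_real (r k) ^ j - 1) * cmod (u j))"
  have "f \<longlonglongrightarrow> (\<Sum>j<K. cmod (complex_of_real 1 ^ j - 1) * cmod (u j))"
    unfolding f_def by (intro tendsto_intros rl)
  then have "f \<longlonglongrightarrow> 0" by simp
  then obtain k0 where k0: "\<And>k. k \<ge> k0 \<Longrightarrow> norm (f k - 0) < \<epsilon>/2"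
    using LIMSEQ_D[of f 0 "\<epsilon>/2"] e by auto
  show "\<exists>no. \<forall>k\<ge>no. norm (nrm (\<lambda>j. complex_of_real (r k) ^ j * u j - u j) - 0) < \<epsilon>"
  proof (intro exI allI impI)
    fix k assume kk: "k \<ge> k0"
    define A where "A = (\<lambda>j. if j < K then (complex_of_real (r k) ^ j - 1) * u j else 0)"
    define B where "B = (\<lambda>j. (complex_of_real (r k) ^ j - 1) * (if j < K then 0 else u j))"
    have dd: "(\<lambda>j. complex_of_real (r k) ^ j * u j - u j) = (\<lambda>j. A j + B j)"
      by (auto simp: A_def B_def fun_eq_iff algebra_simps)
    have Al: "A \<in> l2" "nrm A \<le> (\<Sum>j<K. cmod (A j))" using l2_finite[where K=K and u=A] by (auto simp: A_def)
    have "(\<Sum>j<K. cmod (A j)) = f k" unfolding f_def A_def by (simp add: norm_mult)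
    then have An: "nrm A < \<epsilon>/2" using Al k0[OF kk] by simp
    have bnd1: "cmod (complex_of_real (r k) ^ j - 1) \<le> 1" for j
    proof -
      have "0 \<le> r k ^ j" "r k ^ j \<le> 1" using r[of k] by (auto intro: power_le_one)
      moreover have "complex_of_real (r k) ^ j - 1 = complex_of_real (r k ^ j - 1)" by simp
      ultimately show ?thesis by (simp only: norm_of_real)
    qed
    have Bl: "B \<in> l2" "nrm B \<le> 1 * nrm (\<lambda>m. if m < K then 0 else u m)"
    proof -
      have pw: "cmod (B m) \<le> 1 * cmod (if m < K then 0 else u m)" for m
        unfolding B_def norm_mult using bnd1[of m] by (simp add: mult_left_le_one_le)
      show "B \<in> l2" "nrm B \<le> 1 * nrm (\<lambda>m. if m < K then 0 else u m)"
        using l2_dom[OF tl2, of 1 B] pw by auto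
    qed
    have "nrm (\<lambda>j. A j + B j) \<le> nrm A + nrm B" by (rule l2_add(2)[OF Al(1) Bl(1)])
    moreover have "nrm (\<lambda>j. A j + B j) \<ge> 0" by (rule nrm_nonneg[OF l2_add(1)[OF Al(1) Bl(1)]])
    ultimately show "norm (nrm (\<lambda>j. complex_of_real (r k) ^ j * u j - u j) - 0) < \<epsilon>"
      unfolding dd using An Bl(2) K by simp
  qed
qed

lemma pow_dom: assumes "0 \<le> \<rho>" "\<rho> \<le> 1" "u \<in> l2"
  shows "(\<lambda>m. complex_of_real \<rho> ^ m * u m) \<in> l2"
proof -
  have "cmod (complex_of_real \<rho> ^ m * u m) \<le> 1 * cmod (u m)" for m
  proof -
    have "\<rho> ^ m \<le> 1" using assms by (simp add: power_le_one)
    then show ?thesis using assms by (simp add: norm_mult norm_power mult_left_le_one_le)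
  qed
  then show ?thesis using l2_dom(1)[OF assms(3), of 1] by auto
qed

theorem shift_hyper:
  assumes N: "csub N" and VN: "\<forall>u\<in>N. Vs u \<in> N" and Y: "lop Y C" and C0: "C \<ge> 0"
    and comm: "\<forall>u\<in>l2. Y (Vs u) = Vs (Y u)"
  shows "\<forall>h\<in>N. Y h \<in> N"
proof
  fix h assume hN: "h \<in> N"
  have hl: "h \<in> l2" using csub_l2[OF N hN] .
  define e0 :: "nat \<Rightarrow> complex" where "e0 = (\<lambda>m. if m = 0 then 1 else 0)"
  have e0l: "e0 \<in> l2" by (rule finite_supp_l2[where K=1]) (auto simp: e0_def)
  define \<phi> where "\<phi> = Y e0"
  have \<phi>l: "\<phi> \<in> l2" using lop_l2[OF Y e0l] by (simp add: \<phi>_def)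
  have Yh: "Y h = conv \<phi> h" using lop_conv[OF Y comm hl] by (simp add: \<phi>_def e0_def)
  have Yhl: "Y h \<in> l2" using lop_l2[OF Y hl] .
  define r :: "nat \<Rightarrow> real" where "r = (\<lambda>k. 1 - 1 / (real k + 2))"
  have r0: "0 \<le> r k" for k by (simp add: r_def field_simps)
  have r1: "r k \<le> 1" for k by (simp add: r_def)
  have r1': "r k < 1" for k by (simp add: r_def)
  have rl: "r \<longlonglongrightarrow> 1"
  proof -
    have "(\<lambda>k. 1 / (real k + 2)) \<longlonglongrightarrow> 0"
      using LIMSEQ_ignore_initial_segment[OF lim_1_over_n, of 2] by (simp add: add.commute)
    from tendsto_diff[OF tendsto_const[of 1] this] show ?thesis by (simp add: r_def)
  qed
  define a where "a = (\<lambda>k i. complex_of_real (r k) ^ i * \<phi> i)"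
  have asum: "summable (\<lambda>i. cmod (a k i))" for k
  proof (rule summable_comparison_test)
    show "\<exists>N. \<forall>n\<ge>N. norm (cmod (a k n)) \<le> nrm \<phi> * r k ^ n"
    proof (intro exI[of _ 0] allI impI)
      fix n
      have "0 \<le> r k ^ n" using r0[of k] by simp
      from mult_right_mono[OF coeff_le_nrm[OF \<phi>l, of n] this]
      show "norm (cmod (a k n)) \<le> nrm \<phi> * r k ^ n"
        using r0[of k] by (simp add: a_def norm_mult norm_power mult.commute)
    qed
    show "summable (\<lambda>n. nrm \<phi> * r k ^ n)"
      by (rule summable_mult, rule summable_geometric) (use r0[of k] r1'[of k] in simp)
  qed
  define w where "w = (\<lambda>k. conv (a k) h)"
  have wN: "w k \<in> N" for k unfolding w_def by (rule conv_in_N[OF N VN hN asum])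
  define Dh where "Dh = (\<lambda>k m. complex_of_real (r k) ^ m * h m)"
  define dh where "dh = (\<lambda>k m. h m - Dh k m)"
  have dhl: "dh k \<in> l2" for k
  proof -
    have "Dh k \<in> l2" unfolding Dh_def by (rule pow_dom[OF r0 r1 hl])
    then show ?thesis unfolding dh_def using l2_diff(1)[OF hl] by blast
  qed
  have split: "(\<lambda>m. w k m - Y h m) = (\<lambda>m. conv (a k) (dh k) m +
      (complex_of_real (r k) ^ m * Y h m - Y h m))" for k
  proof
    fix m
    have "conv (a k) (dh k) m = conv (a k) h m - conv (a k) (Dh k) m"
      unfolding conv_def dh_def by (simp add: sum_subtractf[symmetric] algebra_simps)
    moreover have "conv (a k) (Dh k) m = complex_of_real (r k) ^ m * conv \<phi> h m"
      unfolding a_def Dh_def by (rule Dr_conv)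
    ultimately show "w k m - Y h m = conv (a k) (dh k) m +
      (complex_of_real (r k) ^ m * Y h m - Y h m)" by (simp add: w_def Yh)
  qed
  have cl: "conv (a k) (dh k) \<in> l2" "nrm (conv (a k) (dh k)) \<le> C * nrm (dh k)" for k
    using Yw_bound[OF Y comm C0 dhl[of k], of "complex_of_real (r k)"] r0[of k] r1[of k]
    by (auto simp: a_def \<phi>_def e0_def)
  have El: "(\<lambda>m. complex_of_real (r k) ^ m * Y h m - Y h m) \<in> l2" for k
  proof -
    have "(\<lambda>m. complex_of_real (r k) ^ m * Y h m) \<in> l2"
      by (rule pow_dom[OF r0 r1 Yhl])
    then show ?thesis using l2_diff(1)[OF _ Yhl] by blast
  qed
  have bnd: "nrm (\<lambda>m. w k m - Y h m) \<le> C * nrm (dh k) + nrm (\<lambda>m. complex_of_real (r k) ^ m * Y h m - Y h m)" for k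
    unfolding split using l2_add(2)[OF cl(1) El, of k k] cl(2)[of k] by simp
  have ndh: "nrm (dh k) = nrm (\<lambda>m. Dh k m - h m)" for k
  proof -
    have "(\<lambda>m. Dh k m - h m) = (\<lambda>m. - dh k m)" by (simp add: dh_def fun_eq_iff)
    then show ?thesis using l2_neg(2)[OF dhl[of k]] by simp
  qed
  have lim1: "(\<lambda>k. nrm (dh k)) \<longlonglongrightarrow> 0"
    unfolding ndh Dh_def by (rule Dr_lim[OF hl r0 r1 rl])
  have lim2: "(\<lambda>k. nrm (\<lambda>m. complex_of_real (r k) ^ m * Y h m - Y h m)) \<longlonglongrightarrow> 0"
    by (rule Dr_lim[OF Yhl r0 r1 rl])
  have lim3: "(\<lambda>k. C * nrm (dh k) + nrm (\<lambda>m. complex_of_real (r k) ^ m * Y h m - Y h m)) \<longlonglongrightarrow> 0"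
    using tendsto_add[OF tendsto_mult_right_zero[OF lim1, of C] lim2] by simp
  have "(\<lambda>k. nrm (\<lambda>m. w k m - Y h m)) \<longlonglongrightarrow> 0"
  proof (rule tendsto_sandwich[OF _ _ tendsto_const lim3])
    show "eventually (\<lambda>k. 0 \<le> nrm (\<lambda>m. w k m - Y h m)) sequentially"
      using nrm_nonneg[OF l2_diff(1)[OF csub_l2[OF N wN] Yhl]] by simp
    show "eventually (\<lambda>k. nrm (\<lambda>m. w k m - Y h m) \<le> C * nrm (dh k) + nrm (\<lambda>m. complex_of_real (r k) ^ m * Y h m - Y h m)) sequentially"
      using bnd by simp
  qed
  then show "Y h \<in> N" using N wN Yhl unfolding csub_def by blast
qed


definition J :: "(nat \<Rightarrow> complex) \<Rightarrow> (nat \<Rightarrow> complex) \<Rightarrow> nat \<Rightarrow> complex" where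
  "J b c = (\<lambda>m. c m + Vs (\<lambda>k. b k * c k) m)"

fun Jinv :: "(nat \<Rightarrow> complex) \<Rightarrow> (nat \<Rightarrow> complex) \<Rightarrow> nat \<Rightarrow> complex" where
  "Jinv b d 0 = d 0"
| "Jinv b d (Suc k) = d (Suc k) - b k * Jinv b d k"

lemma J_Jinv: "J b (Jinv b d) = d"
proof
  fix m show "J b (Jinv b d) m = d m" by (cases m) (auto simp: J_def Vs_def)
qed

lemma Jinv_J: "Jinv b (J b c) = c"
proof
  fix m show "Jinv b (J b c) m = c m" by (induction m) (auto simp: J_def Vs_def)
qed

lemma J_inj: assumes e: "J b c = J b c'" shows "c = c'"
  using arg_cong[OF e, of "Jinv b"] by (simp add: Jinv_J)

lemma J_add: "J b (\<lambda>m. c m + d m) = (\<lambda>m. J b c m + J b d m)"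
  by (auto simp: J_def Vs_def fun_eq_iff algebra_simps split: nat.split)
lemma J_scale: "J b (\<lambda>m. a * c m) = (\<lambda>m. a * J b c m)"
  by (auto simp: J_def Vs_def fun_eq_iff algebra_simps split: nat.split)
lemma J_zero: "J b (\<lambda>m. 0) = (\<lambda>m. 0)"
  by (auto simp: J_def Vs_def fun_eq_iff split: nat.split)

lemma Jinv_add: "Jinv b (\<lambda>m. c m + d m) = (\<lambda>m. Jinv b c m + Jinv b d m)"
proof -
  have e: "J b (\<lambda>m. Jinv b c m + Jinv b d m) = (\<lambda>m. c m + d m)" by (simp add: J_add J_Jinv)
  show ?thesis using arg_cong[OF e, of "Jinv b"] by (simp add: Jinv_J)
qed
lemma Jinv_scale: "Jinv b (\<lambda>m. a * c m) = (\<lambda>m. a * Jinv b c m)"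
proof -
  have e: "J b (\<lambda>m. a * Jinv b c m) = (\<lambda>m. a * c m)" by (simp add: J_scale J_Jinv)
  show ?thesis using arg_cong[OF e, of "Jinv b"] by (simp add: Jinv_J)
qed
lemma Jinv_diff: "Jinv b (\<lambda>m. c m - d m) = (\<lambda>m. Jinv b c m - Jinv b d m)"
proof -
  have e: "J b (\<lambda>m. Jinv b c m - Jinv b d m) = (\<lambda>m. c m - d m)"
    by (auto simp: J_def Vs_def fun_eq_iff algebra_simps split: nat.split)
  show ?thesis using arg_cong[OF e, of "Jinv b"] by (simp add: Jinv_J)
qed

lemma csub_closed: assumes "csub N" "\<And>k. u k \<in> N" "f \<in> l2" "(\<lambda>k. nrm (\<lambda>m. u k m - f m)) \<longlonglongrightarrow> 0"
  shows "f \<in> N" using assms unfolding csub_def by blast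

locale bseq =
  fixes b :: "nat \<Rightarrow> complex" and n :: nat and B :: real
  assumes bz: "\<And>t. t \<ge> n \<Longrightarrow> b t = 0" and bB: "\<And>t. cmod (b t) \<le> B"
begin

lemma B0: "0 \<le> B" using bB[of 0] norm_ge_zero order_trans by blast

lemma J_l2: assumes "c \<in> l2" shows "J b c \<in> l2" "nrm (J b c) \<le> (1 + B) * nrm c"
proof -
  have bc: "(\<lambda>k. b k * c k) \<in> l2" "nrm (\<lambda>k. b k * c k) \<le> B * nrm c"
    using l2_dom[OF assms B0, of "\<lambda>k. b k * c k"] bB by (auto simp: norm_mult mult_right_mono)
  have "nrm (J b c) \<le> nrm c + nrm (Vs (\<lambda>k. b k * c k))"
    unfolding J_def by (rule l2_add(2)[OF assms Vs_l2(1)[OF bc(1)]])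
  also have "\<dots> \<le> (1 + B) * nrm c" using bc Vs_l2(2)[OF bc(1)] by (simp add: algebra_simps)
  finally show "nrm (J b c) \<le> (1 + B) * nrm c" .
  show "J b c \<in> l2" unfolding J_def by (rule l2_add(1)[OF assms Vs_l2(1)[OF bc(1)]])
qed

definition KJ where "KJ = 1 + (\<Sum>k<n. B * (1 + B) ^ k)"

lemma KJ0: "0 \<le> KJ" unfolding KJ_def using B0 by (simp add: sum_nonneg)

lemma Jinv_coeff: assumes "d \<in> l2" shows "cmod (Jinv b d m) \<le> (1 + B) ^ m * nrm d"
proof (induction m)
  case 0 then show ?case using coeff_le_nrm[OF assms, of 0] by simp
next
  case (Suc k)
  have "cmod (Jinv b d (Suc k)) \<le> cmod (d (Suc k)) + cmod (b k) * cmod (Jinv b d k)"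
    by (simp add: norm_mult order_trans[OF norm_triangle_ineq4])
  also have "\<dots> \<le> nrm d + B * ((1 + B) ^ k * nrm d)"
    using coeff_le_nrm[OF assms, of "Suc k"] Suc bB[of k] B0
    by (intro add_mono mult_mono) auto
  also have "\<dots> \<le> (1 + B) ^ Suc k * nrm d"
  proof -
    have "1 \<le> (1 + B) ^ k" using B0 by (simp add: one_le_power)
    then have "nrm d \<le> (1 + B) ^ k * nrm d" using nrm_nonneg[OF assms] by (simp add: mult_le_cancel_right1)
    then show ?thesis by (simp add: algebra_simps)
  qed
  finally show ?case .
qed

lemma Jinv_l2: assumes "d \<in> l2" shows "Jinv b d \<in> l2" "nrm (Jinv b d) \<le> KJ * nrm d"
proof -
  define u where "u = (\<lambda>k. b k * Jinv b d k)"
  have eq: "Jinv b d = (\<lambda>m. d m - Vs u m)"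
  proof
    fix m show "Jinv b d m = d m - Vs u m" by (cases m) (auto simp: Vs_def u_def)
  qed
  have uz: "\<And>k. k \<ge> n \<Longrightarrow> u k = 0" using bz by (simp add: u_def)
  have ul: "u \<in> l2" "nrm u \<le> (\<Sum>k<n. cmod (u k))" using l2_finite[where K=n and u=u] uz by auto
  have "(\<Sum>k<n. cmod (u k)) \<le> (\<Sum>k<n. B * (1 + B) ^ k * nrm d)"
    by (rule sum_mono) (use bB Jinv_coeff[OF assms] B0 in \<open>auto simp: u_def norm_mult mult.assoc intro!: mult_mono\<close>)
  also have "\<dots> = (\<Sum>k<n. B * (1 + B) ^ k) * nrm d" by (simp add: sum_distrib_right)
  finally have un: "nrm u \<le> (\<Sum>k<n. B * (1 + B) ^ k) * nrm d" using ul by simp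
  show "Jinv b d \<in> l2" unfolding eq by (rule l2_diff(1)[OF assms Vs_l2(1)[OF ul(1)]])
  have "nrm (Jinv b d) \<le> nrm d + nrm (Vs u)" unfolding eq by (rule l2_diff(2)[OF assms Vs_l2(1)[OF ul(1)]])
  also have "\<dots> \<le> KJ * nrm d" using un Vs_l2(2)[OF ul(1)] by (simp add: KJ_def algebra_simps)
  finally show "nrm (Jinv b d) \<le> KJ * nrm d" .
qed

theorem sim_hyper:
  assumes M: "csub M" and AM: "\<forall>c\<in>M. Jinv b (Vs (J b c)) \<in> M"
    and X: "lop X C" and C0: "C \<ge> 0"
    and comm: "\<forall>c\<in>l2. X (Jinv b (Vs (J b c))) = Jinv b (Vs (J b (X c)))"
  shows "\<forall>c\<in>M. X c \<in> M"
proof -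
  define N where "N = J b ` M"
  define Y where "Y = (\<lambda>u. J b (X (Jinv b u)))"
  have Ml: "c \<in> M \<Longrightarrow> c \<in> l2" for c using M by (auto simp: csub_def)
  have csN: "csub N"
    unfolding csub_def
  proof (intro conjI allI impI ballI)
    show "N \<subseteq> l2"
    proof
      fix u assume "u \<in> N"
      then obtain c where "c \<in> M" "u = J b c" unfolding N_def by blast
      then show "u \<in> l2" using J_l2(1)[OF Ml] by simp
    qed
    have "J b (\<lambda>m. 0) \<in> N" using M unfolding N_def csub_def by blast
    then show "(\<lambda>m. 0) \<in> N" by (simp add: J_zero)
    fix u v assume "u \<in> N" "v \<in> N"
    then obtain c d where cd: "c \<in> M" "d \<in> M" "u = J b c" "v = J b d" by (auto simp: N_def)
    have "(\<lambda>m. c m + d m) \<in> M" using M cd unfolding csub_def by blast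
    then have "J b (\<lambda>m. c m + d m) \<in> N" unfolding N_def by blast
    then show "(\<lambda>m. u m + v m) \<in> N" by (simp add: J_add cd)
  next
    fix a u assume "u \<in> N"
    then obtain c where cd: "c \<in> M" "u = J b c" by (auto simp: N_def)
    have "(\<lambda>m. a * c m) \<in> M" using M cd unfolding csub_def by blast
    then have "J b (\<lambda>m. a * c m) \<in> N" unfolding N_def by blast
    then show "(\<lambda>m. a * u m) \<in> N" by (simp add: J_scale cd)
  next
    fix u f assume uN: "\<forall>k. u k \<in> N" and fl: "f \<in> l2" and lim: "(\<lambda>k. nrm (\<lambda>m. u k m - f m)) \<longlonglongrightarrow> 0"
    have JuM: "Jinv b (u k) \<in> M" for k
    proof -
      obtain c where "c \<in> M" "u k = J b c" using uN unfolding N_def by blast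
      then show ?thesis by (simp add: Jinv_J)
    qed
    have ul: "u k \<in> l2" for k
    proof -
      have "J b (Jinv b (u k)) \<in> l2" by (rule J_l2(1)[OF Ml[OF JuM]])
      then show ?thesis by (simp add: J_Jinv)
    qed
    have bnd: "nrm (\<lambda>m. Jinv b (u k) m - Jinv b f m) \<le> KJ * nrm (\<lambda>m. u k m - f m)" for k
      using Jinv_l2(2)[OF l2_diff(1)[OF ul fl]] by (simp add: Jinv_diff)
    have "(\<lambda>k. nrm (\<lambda>m. Jinv b (u k) m - Jinv b f m)) \<longlonglongrightarrow> 0"
    proof (rule tendsto_sandwich[OF _ _ tendsto_const tendsto_mult_right_zero[OF lim, of KJ]])
      show "eventually (\<lambda>k. 0 \<le> nrm (\<lambda>m. Jinv b (u k) m - Jinv b f m)) sequentially"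
        using nrm_nonneg[OF l2_diff(1)[OF Jinv_l2(1)[OF ul] Jinv_l2(1)[OF fl]]] by simp
      show "eventually (\<lambda>k. nrm (\<lambda>m. Jinv b (u k) m - Jinv b f m) \<le> KJ * nrm (\<lambda>m. u k m - f m)) sequentially"
        using bnd by simp
    qed
    then have "Jinv b f \<in> M" by (rule csub_closed[OF M JuM Jinv_l2(1)[OF fl]])
    then have "J b (Jinv b f) \<in> N" unfolding N_def by blast
    then show "f \<in> N" by (simp add: J_Jinv)
  qed
  have VN: "\<forall>u\<in>N. Vs u \<in> N"
  proof
    fix u assume "u \<in> N"
    then obtain c where c: "c \<in> M" "u = J b c" by (auto simp: N_def)
    have "Vs u = J b (Jinv b (Vs (J b c)))" by (simp add: J_Jinv c)
    then show "Vs u \<in> N" using AM c unfolding N_def by blast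
  qed
  have lY: "lop Y ((1 + B) * C * KJ)"
    unfolding lop_def
  proof (intro conjI ballI allI)
    fix u assume ul: "u \<in> l2"
    have Xl: "X (Jinv b u) \<in> l2" using lop_l2[OF X Jinv_l2(1)[OF ul]] .
    show "Y u \<in> l2" unfolding Y_def by (rule J_l2(1)[OF Xl])
    have "nrm (Y u) \<le> (1 + B) * nrm (X (Jinv b u))" unfolding Y_def by (rule J_l2(2)[OF Xl])
    also have "\<dots> \<le> (1 + B) * (C * (KJ * nrm u))"
    proof (rule mult_left_mono)
      have "nrm (X (Jinv b u)) \<le> C * nrm (Jinv b u)" by (rule lop_bound[OF X Jinv_l2(1)[OF ul]])
      also have "\<dots> \<le> C * (KJ * nrm u)" by (rule mult_left_mono[OF Jinv_l2(2)[OF ul] C0])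
      finally show "nrm (X (Jinv b u)) \<le> C * (KJ * nrm u)" .
    qed (use B0 in simp)
    finally show "nrm (Y u) \<le> (1 + B) * C * KJ * nrm u" by (simp add: mult.assoc)
  next
    fix u v assume ul: "u \<in> l2" and vl: "v \<in> l2"
    show "Y (\<lambda>m. u m + v m) = (\<lambda>m. Y u m + Y v m)"
      unfolding Y_def Jinv_add lop_add[OF X Jinv_l2(1)[OF ul] Jinv_l2(1)[OF vl]] J_add ..
  next
    fix a u assume ul: "u \<in> l2"
    show "Y (\<lambda>m. a * u m) = (\<lambda>m. a * Y u m)"
      unfolding Y_def Jinv_scale lop_scale[OF X Jinv_l2(1)[OF ul]] J_scale ..
  qed
  have cY: "\<forall>u\<in>l2. Y (Vs u) = Vs (Y u)"
  proof
    fix u assume ul: "u \<in> l2"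
    define c where "c = Jinv b u"
    have cl: "c \<in> l2" using Jinv_l2(1)[OF ul] by (simp add: c_def)
    have u: "u = J b c" by (simp add: c_def J_Jinv)
    have "Y (Vs u) = J b (X (Jinv b (Vs (J b c))))" by (simp add: Y_def u)
    also have "\<dots> = J b (Jinv b (Vs (J b (X c))))" using comm cl by simp
    also have "\<dots> = Vs (Y u)" by (simp add: J_Jinv Y_def c_def)
    finally show "Y (Vs u) = Vs (Y u)" .
  qed
  have C1: "0 \<le> (1 + B) * C * KJ" using B0 C0 KJ0 by simp
  have YN: "\<forall>h\<in>N. Y h \<in> N" by (rule shift_hyper[OF csN VN lY C1 cY])
  show ?thesis
  proof
    fix c assume c: "c \<in> M"
    have "J b c \<in> N" unfolding N_def using c by blast
    then have "Y (J b c) \<in> N" using YN by blast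
    moreover have "Y (J b c) = J b (X c)" by (simp add: Y_def Jinv_J)
    ultimately have "J b (X c) \<in> J b ` M" by (simp add: N_def)
    then obtain c' where c': "c' \<in> M" "J b (X c) = J b c'" by blast
    then show "X c \<in> M" using J_inj[OF c'(2)] by simp
  qed
qed

end


definition Psi :: "(nat \<Rightarrow> complex) \<Rightarrow> complex \<Rightarrow> complex" where
  "Psi c = (\<lambda>z. if z \<in> ball 0 1 then (\<Sum>m. c m * z ^ m) else 0)"

lemma l2_summable_pow: assumes c: "c \<in> l2" and z: "z \<in> ball 0 1"
  shows "summable (\<lambda>m. c m * z ^ m)"
proof (rule summable_comparison_test)
  show "\<exists>N. \<forall>m\<ge>N. norm (c m * z ^ m) \<le> nrm c * cmod z ^ m"
    using coeff_le_nrm[OF c] by (auto simp: norm_mult norm_power intro!: mult_right_mono)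
  show "summable (\<lambda>m. nrm c * cmod z ^ m)"
    by (rule summable_mult, rule summable_geometric) (use z in simp)
qed

lemma Psi_sums: "c \<in> l2 \<Longrightarrow> z \<in> ball 0 1 \<Longrightarrow> (\<lambda>m. c m * z ^ m) sums Psi c z"
  using l2_summable_pow[of c z] by (simp add: Psi_def summable_sums)

lemma powser_uniq: fixes d :: "nat \<Rightarrow> complex" assumes h: "\<forall>z\<in>ball 0 1. (\<lambda>m. d m * z ^ m) sums 0" shows "d k = 0"
proof (induction k rule: less_induct)
  case (less k)
  have s: "(\<lambda>m. d (m + k) * z ^ m) sums 0" if z0: "z \<noteq> 0" and z1: "norm z < 1" for z
  proof -
    have "(\<lambda>m. d m * z ^ m) sums 0" using h z1 by simp
    from sums_split_initial_segment[OF this, of k]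
    have "(\<lambda>m. d (m + k) * z ^ (m + k)) sums (0 - (\<Sum>i<k. d i * z ^ i))" .
    moreover have "(\<Sum>i<k. d i * z ^ i) = 0" using less by simp
    ultimately have "(\<lambda>m. d (m + k) * z ^ (m + k)) sums 0" by simp
    from sums_mult[OF this, of "1 / z ^ k"]
    show ?thesis using z0 by (simp add: power_add field_simps)
  qed
  have "((\<lambda>z::complex. 0) \<longlongrightarrow> d (0 + k)) (at (0::complex))"
    by (rule powser_limit_0_strong[where s=1 and a="\<lambda>m. d (m + k)" and f="\<lambda>_. 0"]) (use s in auto)
  then have "0 = d (0 + k)" by (rule LIM_const_eq)
  then show "d k = 0" by simp
qed

lemma coeff_uniq: fixes c c' :: "nat \<Rightarrow> complex" assumes "\<forall>z\<in>ball 0 1. (\<lambda>m. c m * z ^ m) sums g z"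
  "\<forall>z\<in>ball 0 1. (\<lambda>m. c' m * z ^ m) sums g z" shows "c = c'"
proof -
  have "\<forall>z\<in>ball 0 1. (\<lambda>m. (c m - c' m) * z ^ m) sums 0"
  proof
    fix z :: complex assume "z \<in> ball 0 1"
    from sums_diff[OF assms(1)[rule_format, OF this] assms(2)[rule_format, OF this]]
    show "(\<lambda>m. (c m - c' m) * z ^ m) sums 0" by (simp add: left_diff_distrib)
  qed
  then have "c m - c' m = 0" for m using powser_uniq[of "\<lambda>m. c m - c' m"] by blast
  then show ?thesis by auto
qed

lemma h2coeff_Psi: assumes c: "c \<in> l2" shows "h2coeff (Psi c) = c"
  unfolding h2coeff_def
proof (rule the_equality)
  show "c \<in> l2 \<and> (\<forall>z\<in>ball 0 1. (\<lambda>m. c m * z ^ m) sums Psi c z)" using c Psi_sums by auto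
  fix c' assume "c' \<in> l2 \<and> (\<forall>z\<in>ball 0 1. (\<lambda>m. c' m * z ^ m) sums Psi c z)"
  then show "c' = c" using coeff_uniq[of c' "Psi c" c] c Psi_sums by auto
qed

lemma Psi_H2: assumes c: "c \<in> l2" shows "Psi c \<in> H2"
proof -
  have "\<forall>z\<in>ball 0 1. (\<lambda>m. c m * z ^ m) sums Psi c z" using Psi_sums[OF c] by auto
  moreover have "\<forall>z. z \<notin> ball 0 1 \<longrightarrow> Psi c z = 0" by (simp add: Psi_def)
  ultimately show ?thesis unfolding H2_def using c by blast
qed

lemma H2_Psi: assumes f: "f \<in> H2" shows "h2coeff f \<in> l2" "Psi (h2coeff f) = f"
proof -
  obtain c where c: "c \<in> l2" "\<forall>z\<in>ball 0 1. (\<lambda>m. c m * z ^ m) sums f z"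
    "\<forall>z. z \<notin> ball 0 1 \<longrightarrow> f z = 0" using f unfolding H2_def by blast
  have "Psi c = f"
  proof
    fix z show "Psi c z = f z"
      using c sums_unique2[OF Psi_sums[OF c(1)]] by (cases "z \<in> ball 0 1") (auto simp: Psi_def)
  qed
  then show "h2coeff f \<in> l2" "Psi (h2coeff f) = f" using h2coeff_Psi[OF c(1)] c(1) by auto
qed

lemma h2norm_nrm: "h2norm f = nrm (h2coeff f)" by (simp add: h2norm_def nrm_def)

lemma Psi_add: assumes "c \<in> l2" "d \<in> l2"
  shows "(\<lambda>z. Psi c z + Psi d z) = Psi (\<lambda>m. c m + d m)"
proof
  fix z show "Psi c z + Psi d z = Psi (\<lambda>m. c m + d m) z"
  proof (cases "z \<in> ball 0 1")
    case True
    from sums_add[OF Psi_sums[OF assms(1) True] Psi_sums[OF assms(2) True]]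
    have "(\<lambda>m. (c m + d m) * z ^ m) sums (Psi c z + Psi d z)" by (simp add: distrib_right)
    then show ?thesis using Psi_sums[OF l2_add(1)[OF assms] True] sums_unique2 by blast
  qed (simp add: Psi_def)
qed

lemma Psi_scale: assumes "c \<in> l2"
  shows "(\<lambda>z. a * Psi c z) = Psi (\<lambda>m. a * c m)"
proof
  fix z show "a * Psi c z = Psi (\<lambda>m. a * c m) z"
  proof (cases "z \<in> ball 0 1")
    case True
    from sums_mult[OF Psi_sums[OF assms True], of a]
    have "(\<lambda>m. (a * c m) * z ^ m) sums (a * Psi c z)" by (simp add: mult.assoc)
    then show ?thesis using Psi_sums[OF l2_scale(1)[OF assms] True] sums_unique2 by blast
  qed (simp add: Psi_def)
qed

lemma Psi_diff: assumes "c \<in> l2" "d \<in> l2"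
  shows "(\<lambda>z. Psi c z - Psi d z) = Psi (\<lambda>m. c m - d m)"
proof
  fix z show "Psi c z - Psi d z = Psi (\<lambda>m. c m - d m) z"
  proof (cases "z \<in> ball 0 1")
    case True
    from sums_diff[OF Psi_sums[OF assms(1) True] Psi_sums[OF assms(2) True]]
    have "(\<lambda>m. (c m - d m) * z ^ m) sums (Psi c z - Psi d z)" by (simp add: left_diff_distrib)
    then show ?thesis using Psi_sums[OF l2_diff(1)[OF assms] True] sums_unique2 by blast
  qed (simp add: Psi_def)
qed

lemma Psi_zero: "Psi (\<lambda>m. 0) = (\<lambda>z. 0)" by (simp add: Psi_def fun_eq_iff)

lemma Vs_sums: assumes u: "u \<in> l2" and z: "z \<in> ball 0 1"
  shows "(\<lambda>m. Vs u m * z ^ m) sums (z * Psi u z)"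
proof -
  from sums_mult[OF Psi_sums[OF u z], of z]
  have "(\<lambda>n. (\<lambda>m. Vs u m * z ^ m) (Suc n)) sums (z * Psi u z)"
    by (simp add: Vs_def mult_ac)
  then show ?thesis by (subst (asm) sums_Suc_iff) (simp add: Vs_def)
qed

lemma Mz_Psi: assumes "d \<in> l2" shows "Mz (Psi d) = Psi (Vs d)"
proof
  fix z show "Mz (Psi d) z = Psi (Vs d) z"
  proof (cases "z \<in> ball 0 1")
    case True
    then show ?thesis using Vs_sums[OF assms True] Psi_sums[OF Vs_l2(1)[OF assms] True] sums_unique2
      by (simp add: Mz_def) blast
  qed (simp add: Psi_def Mz_def)
qed

context bseq
begin

lemma fb_sums: assumes c: "c \<in> l2" and z: "z \<in> ball 0 1"
  shows "(\<lambda>m. c m * fb b m z) sums Psi (J b c) z"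
proof -
  define bc where "bc = (\<lambda>k. b k * c k)"
  have bcl: "bc \<in> l2" using l2_dom(1)[OF c B0, of bc] bB by (auto simp: bc_def norm_mult mult_right_mono)
  have s1: "(\<lambda>m. c m * z ^ m) sums Psi c z" by (rule Psi_sums[OF c z])
  have s2: "(\<lambda>m. z * (bc m * z ^ m)) sums (z * Psi bc z)" by (rule sums_mult[OF Psi_sums[OF bcl z]])
  from sums_add[OF s1 s2]
  have A: "(\<lambda>m. c m * fb b m z) sums (Psi c z + z * Psi bc z)"
    by (simp add: fb_def bc_def algebra_simps)
  from sums_add[OF s1 Vs_sums[OF bcl z]]
  have "(\<lambda>m. J b c m * z ^ m) sums (Psi c z + z * Psi bc z)"
    by (simp add: J_def bc_def algebra_simps)
  then have "Psi (J b c) z = Psi c z + z * Psi bc z"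
    using Psi_sums[OF J_l2(1)[OF c] z] sums_unique2 by blast
  then show ?thesis using A by simp
qed

lemma Uk_adj_Psi: assumes h: "h \<in> H2" shows "Uk_adj b h = Psi (J b (h2coeff h))"
proof
  fix z show "Uk_adj b h z = Psi (J b (h2coeff h)) z"
    using fb_sums[OF H2_Psi(1)[OF h], of z]
    by (cases "z \<in> ball 0 1") (auto simp: Uk_adj_def Psi_def sums_iff)
qed

lemma hk_coeff_Psi: assumes e: "e \<in> l2" shows "hk_coeff b (Psi e) = Jinv b e"
  unfolding hk_coeff_def
proof (rule the_equality)
  show "Jinv b e \<in> l2 \<and> (\<forall>z\<in>ball 0 1. (\<lambda>m. Jinv b e m * fb b m z) sums Psi e z)"
    using Jinv_l2(1)[OF e] fb_sums[OF Jinv_l2(1)[OF e]] by (simp add: J_Jinv)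
  fix c assume c: "c \<in> l2 \<and> (\<forall>z\<in>ball 0 1. (\<lambda>m. c m * fb b m z) sums Psi e z)"
  have "\<forall>z\<in>ball 0 1. (\<lambda>m. J b c m * z ^ m) sums Psi e z"
  proof
    fix z :: complex assume z: "z \<in> ball 0 1"
    have "Psi (J b c) z = Psi e z" using fb_sums[OF _ z, of c] c z sums_unique2 by blast
    then show "(\<lambda>m. J b c m * z ^ m) sums Psi e z" using Psi_sums[OF J_l2(1) z, of c] c by simp
  qed
  then have "J b c = e" using coeff_uniq[of "J b c" "Psi e" e] Psi_sums[OF e] by blast
  then show "c = Jinv b e" by (metis Jinv_J)
qed

lemma Uk_Psi: assumes e: "e \<in> l2" shows "Uk b (Psi e) = Psi (Jinv b e)"
  by (simp only: Uk_def hk_coeff_Psi[OF e]) (simp add: Psi_def)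

lemma Sn_Psi: assumes f: "f \<in> H2" shows "Sn b f = Psi (Jinv b (Vs (J b (h2coeff f))))"
proof -
  have a: "h2coeff f \<in> l2" by (rule H2_Psi(1)[OF f])
  have "Sn b f = Uk b (Mz (Psi (J b (h2coeff f))))" by (simp add: Sn_def Uk_adj_Psi[OF f])
  also have "\<dots> = Uk b (Psi (Vs (J b (h2coeff f))))" by (simp add: Mz_Psi[OF J_l2(1)[OF a]])
  also have "\<dots> = Psi (Jinv b (Vs (J b (h2coeff f))))" by (rule Uk_Psi[OF Vs_l2(1)[OF J_l2(1)[OF a]]])
  finally show ?thesis .
qed

end


theorem theorem5p1:
  fixes n :: nat and b :: "nat \<Rightarrow> complex"
    and M :: "(complex \<Rightarrow> complex) set"
    and X :: "(complex \<Rightarrow> complex) \<Rightarrow> (complex \<Rightarrow> complex)"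
  assumes "n \<ge> 1"
    and "\<forall>t\<ge>n. b t = 0"
    and "h2_closed_subspace M"
    and "\<forall>f\<in>M. Sn b f \<in> M"
    and "h2_bounded_op X"
    and "\<forall>f\<in>H2. X (Sn b f) = Sn b (X f)"
  shows "\<forall>f\<in>M. X f \<in> M"
proof -
  define B where "B = (\<Sum>t<n. cmod (b t))"
  interpret bseq b n B
  proof
    show "b t = 0" if "t \<ge> n" for t using assms(2) that by simp
    show "cmod (b t) \<le> B" for t
    proof (cases "t < n")
      case True then show ?thesis unfolding B_def by (intro member_le_sum) auto
    next
      case False then show ?thesis using assms(2) by (simp add: B_def sum_nonneg)
    qed
  qed
  have MH: "M \<subseteq> H2" and M0: "(\<lambda>z. 0) \<in> M"
    and Madd: "\<And>f g. f \<in> M \<Longrightarrow> g \<in> M \<Longrightarrow> (\<lambda>z. f z + g z) \<in> M"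
    and Msc: "\<And>a f. f \<in> M \<Longrightarrow> (\<lambda>z. a * f z) \<in> M"
    and Mcl: "\<And>u f. (\<forall>k. u k \<in> M) \<Longrightarrow> f \<in> H2 \<Longrightarrow> (\<lambda>k. h2norm (\<lambda>z. u k z - f z)) \<longlonglongrightarrow> 0 \<Longrightarrow> f \<in> M"
    using assms(3) unfolding h2_closed_subspace_def by blast+
  obtain C where C: "\<forall>f\<in>H2. h2norm (X f) \<le> C * h2norm f"
    and XH: "\<And>f. f \<in> H2 \<Longrightarrow> X f \<in> H2"
    and Xadd: "\<And>f g. f \<in> H2 \<Longrightarrow> g \<in> H2 \<Longrightarrow> X (\<lambda>z. f z + g z) = (\<lambda>z. X f z + X g z)"
    and Xsc: "\<And>a f. f \<in> H2 \<Longrightarrow> X (\<lambda>z. a * f z) = (\<lambda>z. a * X f z)"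
    using assms(5) unfolding h2_bounded_op_def by blast
  define C' where "C' = max C 0"
  define A where "A = (\<lambda>c. Jinv b (Vs (J b c)))"
  have Al: "c \<in> l2 \<Longrightarrow> A c \<in> l2" for c unfolding A_def by (intro Jinv_l2(1) Vs_l2(1) J_l2(1))
  have Sn_eq: "f \<in> H2 \<Longrightarrow> Sn b f = Psi (A (h2coeff f))" for f unfolding A_def by (rule Sn_Psi)
  define M' where "M' = h2coeff ` M"
  define X' where "X' = (\<lambda>c. h2coeff (X (Psi c)))"
  have fM: "f \<in> M \<Longrightarrow> f \<in> H2" for f using MH by blast
  have XPsi: "c \<in> l2 \<Longrightarrow> X (Psi c) = Psi (X' c)" for c
    unfolding X'_def using H2_Psi(2)[OF XH[OF Psi_H2]] by simp
  have X'l: "c \<in> l2 \<Longrightarrow> X' c \<in> l2" for c unfolding X'_def using H2_Psi(1)[OF XH[OF Psi_H2]] by simp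
  have zl: "(\<lambda>m. 0::complex) \<in> l2" by (simp add: l2_def)
  have csM: "csub M'"
    unfolding csub_def
  proof (intro conjI allI impI ballI)
    show "M' \<subseteq> l2" using H2_Psi(1) fM by (auto simp: M'_def)
    have "h2coeff (\<lambda>z. 0) = (\<lambda>m. 0)" using h2coeff_Psi[OF zl] by (simp add: Psi_zero)
    then show "(\<lambda>m. 0) \<in> M'" using M0 unfolding M'_def by force
  next
    fix u v assume "u \<in> M'" "v \<in> M'"
    then obtain f g where fg: "f \<in> M" "g \<in> M" "u = h2coeff f" "v = h2coeff g" by (auto simp: M'_def)
    have "(\<lambda>z. f z + g z) = Psi (\<lambda>m. u m + v m)"
      using Psi_add[OF H2_Psi(1)[OF fM] H2_Psi(1)[OF fM]] H2_Psi(2)[OF fM] fg by metis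
    then have "h2coeff (\<lambda>z. f z + g z) = (\<lambda>m. u m + v m)"
      using h2coeff_Psi l2_add(1) H2_Psi(1)[OF fM] fg by metis
    then show "(\<lambda>m. u m + v m) \<in> M'" using Madd[OF fg(1,2)] unfolding M'_def by force
  next
    fix a u assume "u \<in> M'"
    then obtain f where fg: "f \<in> M" "u = h2coeff f" by (auto simp: M'_def)
    have "(\<lambda>z. a * f z) = Psi (\<lambda>m. a * u m)"
      using Psi_scale[OF H2_Psi(1)[OF fM]] H2_Psi(2)[OF fM] fg by metis
    then have "h2coeff (\<lambda>z. a * f z) = (\<lambda>m. a * u m)"
      using h2coeff_Psi l2_scale(1) H2_Psi(1)[OF fM] fg by metis
    moreover have "(\<lambda>z. a * f z) \<in> M" by (rule Msc[OF fg(1)])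
    ultimately show "(\<lambda>m. a * u m) \<in> M'" unfolding M'_def by (metis image_eqI)
  next
    fix u f assume uM: "\<forall>k. u k \<in> M'" and fl: "f \<in> l2" and lim: "(\<lambda>k. nrm (\<lambda>m. u k m - f m)) \<longlonglongrightarrow> 0"
    define F where "F = (\<lambda>k. Psi (u k))"
    have ul: "u k \<in> l2" for k
    proof -
      obtain g where "g \<in> M" "u k = h2coeff g" using uM by (auto simp: M'_def)
      then show ?thesis using H2_Psi(1)[OF fM] by simp
    qed
    have FM: "F k \<in> M" for k
    proof -
      obtain g where "g \<in> M" "u k = h2coeff g" using uM by (auto simp: M'_def)
      then show ?thesis using H2_Psi(2)[OF fM] by (simp add: F_def)
    qed
    have "h2norm (\<lambda>z. F k z - Psi f z) = nrm (\<lambda>m. u k m - f m)" for k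
      unfolding F_def Psi_diff[OF ul fl] h2norm_nrm h2coeff_Psi[OF l2_diff(1)[OF ul fl]] ..
    then have "Psi f \<in> M" using Mcl[of F "Psi f"] FM Psi_H2[OF fl] lim by simp
    then show "f \<in> M'" using h2coeff_Psi[OF fl] unfolding M'_def by force
  qed
  have AM: "\<forall>c\<in>M'. A c \<in> M'"
  proof
    fix c assume "c \<in> M'"
    then obtain f where f: "f \<in> M" "c = h2coeff f" by (auto simp: M'_def)
    have "h2coeff (Sn b f) = A c"
      using Sn_eq[OF fM[OF f(1)]] h2coeff_Psi[OF Al[OF H2_Psi(1)[OF fM[OF f(1)]]]] f by simp
    then show "A c \<in> M'" using assms(4) f unfolding M'_def by force
  qed
  have lX: "lop X' C'"
    unfolding lop_def
  proof (intro conjI ballI allI)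
    fix u assume ul: "u \<in> l2"
    show "X' u \<in> l2" by (rule X'l[OF ul])
    have "nrm (X' u) = h2norm (X (Psi u))" by (simp add: X'_def h2norm_nrm)
    also have "\<dots> \<le> C * h2norm (Psi u)" using C Psi_H2[OF ul] by blast
    also have "\<dots> = C * nrm u" by (simp add: h2norm_nrm h2coeff_Psi[OF ul])
    also have "\<dots> \<le> C' * nrm u" unfolding C'_def using nrm_nonneg[OF ul] by (simp add: mult_right_mono)
    finally show "nrm (X' u) \<le> C' * nrm u" .
  next
    fix u v assume ul: "u \<in> l2" and vl: "v \<in> l2"
    have "X' (\<lambda>m. u m + v m) = h2coeff (X (\<lambda>z. Psi u z + Psi v z))"
      by (simp add: X'_def Psi_add[OF ul vl])
    also have "\<dots> = h2coeff (\<lambda>z. Psi (X' u) z + Psi (X' v) z)"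
      by (simp add: Xadd[OF Psi_H2[OF ul] Psi_H2[OF vl]] XPsi[OF ul] XPsi[OF vl])
    also have "\<dots> = (\<lambda>m. X' u m + X' v m)"
      by (simp add: Psi_add[OF X'l[OF ul] X'l[OF vl]] h2coeff_Psi[OF l2_add(1)[OF X'l[OF ul] X'l[OF vl]]])
    finally show "X' (\<lambda>m. u m + v m) = (\<lambda>m. X' u m + X' v m)" .
  next
    fix a u assume ul: "u \<in> l2"
    have "X' (\<lambda>m. a * u m) = h2coeff (X (\<lambda>z. a * Psi u z))"
      by (simp add: X'_def Psi_scale[OF ul])
    also have "\<dots> = h2coeff (\<lambda>z. a * Psi (X' u) z)"
      by (simp add: Xsc[OF Psi_H2[OF ul]] XPsi[OF ul])
    also have "\<dots> = (\<lambda>m. a * X' u m)"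
      by (simp add: Psi_scale[OF X'l[OF ul]] h2coeff_Psi[OF l2_scale(1)[OF X'l[OF ul]]])
    finally show "X' (\<lambda>m. a * u m) = (\<lambda>m. a * X' u m)" .
  qed
  have cX: "\<forall>c\<in>l2. X' (A c) = A (X' c)"
  proof
    fix c assume cl: "c \<in> l2"
    have "Psi (A c) = Sn b (Psi c)" using Sn_eq[OF Psi_H2[OF cl]] h2coeff_Psi[OF cl] by simp
    then have "X' (A c) = h2coeff (X (Sn b (Psi c)))" by (simp add: X'_def)
    also have "\<dots> = h2coeff (Sn b (X (Psi c)))" using assms(6) Psi_H2[OF cl] by simp
    also have "\<dots> = h2coeff (Psi (A (X' c)))"
      using Sn_eq[OF XH[OF Psi_H2[OF cl]]] by (simp add: X'_def)
    also have "\<dots> = A (X' c)" by (rule h2coeff_Psi[OF Al[OF X'l[OF cl]]])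
    finally show "X' (A c) = A (X' c)" .
  qed
  have C'0: "C' \<ge> 0" by (simp add: C'_def)
  have hyp: "\<forall>c\<in>M'. X' c \<in> M'"
    by (rule sim_hyper[OF csM AM[unfolded A_def] lX C'0 cX[unfolded A_def]])
  show ?thesis
  proof
    fix f assume f: "f \<in> M"
    have fH: "f \<in> H2" by (rule fM[OF f])
    have "X' (h2coeff f) \<in> M'" using hyp f unfolding M'_def by blast
    moreover have "X' (h2coeff f) = h2coeff (X f)" unfolding X'_def using H2_Psi(2)[OF fH] by simp
    ultimately obtain g where g: "g \<in> M" "h2coeff (X f) = h2coeff g" unfolding M'_def by auto
    have "X f = Psi (h2coeff (X f))" using H2_Psi(2)[OF XH[OF fH]] by simp
    also have "\<dots> = g" using g H2_Psi(2)[OF fM[OF g(1)]] by simp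
    finally show "X f \<in> M" using g(1) by simp
  qed
qed


end
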